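(* Let $G$ be a connected graph with $n\ge 2$ vertices. If the maximum degree satisfies $\Delta(G)<n/2$, then $\frac{q(G)}{R(G)}<\frac{n}{\sqrt{n-1}}$.
   Context: All graphs are finite and simple; $\Delta(G)$ is the maximum degree. For a vertex $u$, $d(u)$ is its degree. The Randić index is $R(G)=\sum_{\{u,v\}\in E(G)} \frac{1}{\sqrt{d(u)d(v)}}$. The signless Laplacian is $Q=D+A$ ($D$ the diagonal degree matrix, $A$ the adjacency matrix), and $q(G)$ is its largest eigenvalue. *)

theory Defs
  imports "HOL-Analysis.Analysis"
begin

definition simple_graph :: "('a::finite \<Rightarrow> 'a \<Rightarrow> bool) \<Rightarrow> bool" where
  "simple_graph E \<longleftrightarrow> (\<forall>u v. E u v \<longleftrightarrow> E v u) \<and> (\<forall>u. \<not> E u u)"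

definition connected_graph :: "('a::finite \<Rightarrow> 'a \<Rightarrow> bool) \<Rightarrow> bool" where
  "connected_graph E \<longleftrightarrow> (\<forall>u v. (u, v) \<in> {(x, y). E x y}\<^sup>*)"

definition degree :: "('a::finite \<Rightarrow> 'a \<Rightarrow> bool) \<Rightarrow> 'a \<Rightarrow> nat" where
  "degree E u = card {v. E u v}"

definition max_degree :: "('a::finite \<Rightarrow> 'a \<Rightarrow> bool) \<Rightarrow> nat" where
  "max_degree E = Max (range (degree E))"

definition randic_index :: "('a::finite \<Rightarrow> 'a \<Rightarrow> bool) \<Rightarrow> real" where
  "randic_index E = (\<Sum>e\<in>{{u, v} | u v. E u v}.
      1 / sqrt (\<Prod>w\<in>e. real (degree E w)))"

definition adjacency_matrix :: "('a::finite \<Rightarrow> 'a \<Rightarrow> bool) \<Rightarrow> real^'a^'a" where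
  "adjacency_matrix E = (\<chi> i j. if E i j then 1 else 0)"

definition degree_matrix :: "('a::finite \<Rightarrow> 'a \<Rightarrow> bool) \<Rightarrow> real^'a^'a" where
  "degree_matrix E = (\<chi> i j. if i = j then real (degree E i) else 0)"

definition signless_laplacian :: "('a::finite \<Rightarrow> 'a \<Rightarrow> bool) \<Rightarrow> real^'a^'a" where
  "signless_laplacian E = degree_matrix E + adjacency_matrix E"

definition is_eigenvalue :: "real^'n^'n \<Rightarrow> real \<Rightarrow> bool" where
  "is_eigenvalue M c \<longleftrightarrow> (\<exists>x. x \<noteq> 0 \<and> M *v x = c *\<^sub>R x)"

text \<open>q(G): the largest eigenvalue of the signless Laplacian (real symmetric matrix,
  so all eigenvalues are real).\<close>
definition signless_spectral_radius :: "('a::finite \<Rightarrow> 'a \<Rightarrow> bool) \<Rightarrow> real" where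
  "signless_spectral_radius E = Max {c. is_eigenvalue (signless_laplacian E) c}"

end

theory Submission
  imports Defs
begin

lemma sym_inner:
  fixes M :: "real^'n^'n" assumes "transpose M = M"
  shows "x \<bullet> (M *v y) = (M *v x) \<bullet> y"
proof -
  have "x \<bullet> (M *v y) = (x v* M) \<bullet> y" by (simp add: dot_lmul_matrix)
  also have "x v* M = M *v x" using vector_transpose_matrix[of x M] assms by simp
  finally show ?thesis .
qed

lemma sym_eigen_exists:
  fixes M :: "real^'n^'n" assumes sym: "transpose M = M"
  shows "\<exists>c. is_eigenvalue M c"
proof -
  define f where "f = (\<lambda>x::real^'n. x \<bullet> (M *v x))"
  have cont: "continuous_on (sphere 0 1) f" unfolding f_def by (intro continuous_intros)
  have ne: "sphere (0::real^'n) 1 \<noteq> {}"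
  proof -
    obtain i :: 'n where True by blast
    have "axis i (1::real) \<in> sphere 0 1" by (simp add: dist_norm)
    then show ?thesis by blast
  qed
  obtain x where xS: "x \<in> sphere 0 1" and xmax: "\<And>y. y \<in> sphere 0 1 \<Longrightarrow> f y \<le> f x"
    using continuous_attains_sup[OF compact_sphere ne cont] by blast
  define lam where "lam = f x"
  have nx: "norm x = 1" using xS by (simp add: sphere_def dist_norm)
  have xx: "x \<bullet> x = 1" using nx by (simp add: norm_eq_sqrt_inner)
  define g where "g = (\<lambda>y::real^'n. lam * (y \<bullet> y) - y \<bullet> (M *v y))"
  have gnn: "g y \<ge> 0" for y
  proof (cases "y = 0")
    case True then show ?thesis by (simp add: g_def)
  next
    case False
    define u where "u = (1 / norm y) *\<^sub>R y"
    have yu: "y = norm y *\<^sub>R u" using False by (simp add: u_def)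
    have "u \<in> sphere 0 1" using False by (simp add: u_def sphere_def dist_norm)
    then have "f u \<le> lam" using xmax lam_def by blast
    moreover have "u \<bullet> u = 1" using False by (simp add: u_def inner_commute) 
      (metis norm_eq_sqrt_inner power2_norm_eq_inner inner_commute divide_self_if norm_eq_zero power2_eq_square mult.commute)
    moreover have "g y = (norm y)^2 * (lam * (u \<bullet> u) - f u)"
    proof -
      have "g y = g (norm y *\<^sub>R u)" by (rule arg_cong[where f=g, OF yu])
      also have "\<dots> = (norm y)^2 * (lam * (u \<bullet> u) - f u)"
        by (simp add: g_def f_def matrix_vector_mult_scaleR algebra_simps power2_eq_square)
      finally show ?thesis .
    qed
    ultimately show ?thesis by simp
  qed
  have gx: "g x = 0" by (simp add: g_def lam_def f_def xx)
  define z where "z = M *v x - lam *\<^sub>R x"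
  have z0: "z = 0"
  proof (rule ccontr)
    assume "z \<noteq> 0"
    define a where "a = z \<bullet> z"
    have apos: "a > 0" using \<open>z \<noteq> 0\<close> by (simp add: a_def)
    define b where "b = g z"
    have bnn: "b \<ge> 0" using gnn b_def by simp
    define t where "t = a / (b + 1)"
    have tpos: "t > 0" using apos bnn by (simp add: t_def)
    have zM: "z \<bullet> (M *v x) = (M *v z) \<bullet> x" using sym_inner[OF sym] by simp
    have "g (x + t *\<^sub>R z) = g x - 2 * t * (z \<bullet> (M *v x) - lam * (z \<bullet> x)) + t^2 * g z"
      using sym_inner[OF sym, of x z]
      by (simp add: g_def algebra_simps inner_commute power2_eq_square)
    also have "z \<bullet> (M *v x) - lam * (z \<bullet> x) = a"
      by (simp add: a_def z_def algebra_simps inner_commute)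
    finally have "g (x + t *\<^sub>R z) = - 2 * t * a + t^2 * b" using gx b_def by simp
    also have "\<dots> = t * (t * b - 2 * a)" by (simp add: algebra_simps power2_eq_square)
    also have "t * b - 2 * a < 0"
    proof -
      have "t * b \<le> a" using apos bnn by (simp add: t_def field_simps)
      then show ?thesis using apos by simp
    qed
    then have "t * (t * b - 2 * a) < 0" using tpos by (simp add: mult_pos_neg)
    finally show False using gnn[of "x + t *\<^sub>R z"] by simp
  qed
  have "x \<noteq> 0" using nx by auto
  moreover have "M *v x = lam *\<^sub>R x" using z0 by (simp add: z_def)
  ultimately show ?thesis unfolding is_eigenvalue_def by blast
qed

lemma sym_eigen_finite:
  fixes M :: "real^'n^'n" assumes sym: "transpose M = M"
  shows "finite {c. is_eigenvalue M c}"
proof -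
  define S where "S = {c. is_eigenvalue M c}"
  define v where "v = (\<lambda>c. SOME x. x \<noteq> 0 \<and> M *v x = c *\<^sub>R x)"
  have v: "v c \<noteq> 0 \<and> M *v v c = c *\<^sub>R v c" if "c \<in> S" for c
    using that someI_ex[of "\<lambda>x. x \<noteq> 0 \<and> M *v x = c *\<^sub>R x"]
    unfolding S_def is_eigenvalue_def v_def by auto
  have inj: "inj_on v S"
  proof (rule inj_onI)
    fix c d assume "c \<in> S" "d \<in> S" "v c = v d"
    then have "c *\<^sub>R v c = d *\<^sub>R v c" using v by metis
    then show "c = d" using v[OF \<open>c \<in> S\<close>] by (simp add: scaleR_cancel_right)
  qed
  have orth: "pairwise orthogonal (v ` S)"
  proof (clarsimp simp: pairwise_def)
    fix c d assume cS: "c \<in> S" and dS: "d \<in> S" and ne: "v c \<noteq> v d"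
    then have "c \<noteq> d" by blast
    have "c * (v c \<bullet> v d) = (M *v v c) \<bullet> v d" using v[OF cS] by simp
    also have "\<dots> = v c \<bullet> (M *v v d)" using sym_inner[OF sym] by simp
    also have "\<dots> = d * (v c \<bullet> v d)" using v[OF dS] by simp
    finally have "(c - d) * (v c \<bullet> v d) = 0" by (simp add: algebra_simps)
    then show "orthogonal (v c) (v d)" using \<open>c \<noteq> d\<close> by (simp add: orthogonal_def)
  qed
  have "0 \<notin> v ` S" using v by auto
  then have "independent (v ` S)" using pairwise_orthogonal_independent orth by blast
  then have "finite (v ` S)" using independent_bound by blast
  then show ?thesis using finite_imageD inj S_def by blast
qed

lemma key_ineq:
  fixes x y s :: real
  assumes "1 \<le> x" "x \<le> s" "1 \<le> y" "y \<le> s"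
  shows "s / (s^2 + 1) * (1 / x^2 + 1 / y^2) \<le> 1 / (x * y)"
proof -
  have "0 \<le> (s * x - y) * (s * y - x)"
  proof -
    have h1: "s * x \<ge> s * 1" using assms by (intro mult_left_mono) auto
    have h2: "s * y \<ge> s * 1" using assms by (intro mult_left_mono) auto
    have "0 \<le> s * x - y" using h1 assms by linarith
    moreover have "0 \<le> s * y - x" using h2 assms by linarith
    ultimately show ?thesis by (rule mult_nonneg_nonneg)
  qed
  then have "s * (y^2 + x^2) \<le> (s^2 + 1) * (x * y)" by (simp add: algebra_simps power2_eq_square)
  then have "s * (y^2 + x^2) / ((s^2 + 1) * (x * y)^2) \<le> (s^2 + 1) * (x * y) / ((s^2 + 1) * (x * y)^2)"
    using assms by (intro divide_right_mono) auto
  moreover have "s / (s^2 + 1) * (1 / x^2 + 1 / y^2) = s * (y^2 + x^2) / ((s^2 + 1) * (x * y)^2)"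
    using assms by (simp add: field_simps power2_eq_square)
  moreover have "(s^2 + 1) * (x * y) / ((s^2 + 1) * (x * y)^2) = 1 / (x * y)"
  proof -
    have "x * y > 0" "s^2 + 1 > 0" using assms by (auto intro: add_pos_nonneg)
    then show ?thesis by (simp add: power2_eq_square)
  qed
  ultimately show ?thesis by simp
qed

lemma final_arith:
  fixes D N :: real
  assumes "1 \<le> D" "2 * D \<le> N - 1"
  shows "2 * D / (sqrt D / (D + 1) * N) < N / sqrt (N - 1)"
proof -
  have N: "N \<ge> 3" using assms by simp
  have "D * (N - 1) < (N^2 / (2 * (D + 1)))^2"
  proof -
    have "(2 * D) * (2 * (N - 1)) \<le> (N - 1) * (2 * (N - 1))" using assms N by (intro mult_right_mono) auto
    then have a: "4 * D * (N - 1) \<le> 2 * (N - 1)^2" by (simp add: power2_eq_square algebra_simps)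
    have "(2 * (D + 1))^2 \<le> (N + 1)^2" using assms N by (intro power_mono) auto
    then have b: "4 * (D + 1)^2 \<le> (N + 1)^2" by (simp add: power2_eq_square algebra_simps)
    have "(4 * D * (N - 1)) * (4 * (D + 1)^2) \<le> (2 * (N - 1)^2) * (N + 1)^2"
      by (rule mult_mono[OF a b]) simp_all
    also have "\<dots> < 4 * N^4"
    proof -
      have N9: "(3::real)^2 \<le> N^2" using N by (intro power_mono) auto
      have "(N^2 - 1)^2 < (N^2)^2" using N9 by (intro power_strict_mono) auto
      moreover have "(2 * (N - 1)^2) * (N + 1)^2 = 2 * (N^2 - 1)^2" by (simp add: power2_eq_square algebra_simps)
      moreover have "(N^2)^2 = N^4" by simp
      ultimately show ?thesis using N by (smt (verit) power2_less_eq_zero_iff zero_le_power2)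
    qed
    finally have "D * (N - 1) * (4 * (D + 1)^2) < N^4" by (simp add: algebra_simps)
    moreover have "(N^2 / (2 * (D + 1)))^2 = N^4 / (4 * (D + 1)^2)"
    proof -
      have e1: "(2 * (D + 1))^2 = 4 * (D + 1)^2" by (simp only: power_mult_distrib) simp
      have e2: "(N^2)^2 = N^4" by simp
      show ?thesis by (simp only: power_divide e1 e2)
    qed
    moreover have "4 * (D + 1)^2 > 0" using assms by simp
    ultimately show ?thesis by (simp add: pos_less_divide_eq)
  qed
  then have "sqrt (D * (N - 1)) < N^2 / (2 * (D + 1))"
    using assms by (intro real_less_lsqrt) auto
  then have "2 * (D + 1) * sqrt (D * (N - 1)) < N^2" using assms by (simp add: field_simps)
  then have "2 * (D + 1) * sqrt D * sqrt (N - 1) < N * N" by (simp add: real_sqrt_mult power2_eq_square mult.assoc)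
  moreover have sD: "sqrt D > 0" and sN: "sqrt (N - 1) > 0" using assms by auto
  moreover have l: "2 * D / (sqrt D / (D + 1) * N) = 2 * (D + 1) * sqrt D / N"
  proof -
    define s where "s = sqrt D"
    have sq: "D = s * s" using assms by (simp add: s_def)
    have s0: "s > 0" using assms by (simp add: s_def)
    show ?thesis unfolding s_def[symmetric] sq using s0 N
      by (simp add: field_simps)
  qed
  ultimately show ?thesis using N
    by (simp add: divide_less_eq less_divide_eq mult.commute mult.left_commute)
qed

lemma sg_sym: "simple_graph E \<Longrightarrow> E u v = E v u" unfolding simple_graph_def by blast
lemma sg_irr: "simple_graph E \<Longrightarrow> \<not> E u u" unfolding simple_graph_def by blast

lemma deg_le_max: "degree E u \<le> max_degree E"
  unfolding max_degree_def by (rule Max_ge) auto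

lemma eig_bound:
  fixes E :: "'a::finite \<Rightarrow> 'a \<Rightarrow> bool"
  assumes sg: "simple_graph E" and ev: "is_eigenvalue (signless_laplacian E) c"
  shows "c \<le> 2 * real (max_degree E)"
proof -
  obtain x where x0: "x \<noteq> 0" and ex: "signless_laplacian E *v x = c *\<^sub>R x"
    using ev unfolding is_eigenvalue_def by blast
  define m where "m = Max (range (\<lambda>j. \<bar>x$j\<bar>))"
  have "m \<in> range (\<lambda>j. \<bar>x$j\<bar>)" unfolding m_def by (rule Max_in) auto
  then obtain i where im: "\<bar>x$i\<bar> = m" by auto
  have xle: "\<bar>x$j\<bar> \<le> \<bar>x$i\<bar>" for j unfolding im m_def by (rule Max_ge) auto
  obtain j where "x$j \<noteq> 0" using x0 by (metis vec_eq_iff zero_index)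
  then have xi: "\<bar>x$i\<bar> > 0" using xle[of j] by linarith
  define N where "N = {v. E i v}"
  have row: "(signless_laplacian E *v x)$i = real (degree E i) * x$i + (\<Sum>j\<in>N. x$j)"
  proof -
    have "(signless_laplacian E *v x)$i = (\<Sum>j\<in>UNIV. (if i = j then real (degree E i) * x$j else 0) + (if E i j then x$j else 0))"
      unfolding signless_laplacian_def degree_matrix_def adjacency_matrix_def matrix_vector_mult_def
      by (simp add: distrib_right) (rule sum.cong, auto)
    also have "\<dots> = (\<Sum>j\<in>UNIV. (if i = j then real (degree E i) * x$j else 0)) + (\<Sum>j\<in>UNIV. (if E i j then x$j else 0))"
      by (rule sum.distrib)
    also have "(\<Sum>j\<in>UNIV. (if E i j then x$j else 0)) = (\<Sum>j\<in>N. x$j)"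
      unfolding N_def by (rule sum.inter_filter[symmetric, where A=UNIV, simplified]) simp
    finally show ?thesis by simp
  qed
  have "\<bar>\<Sum>j\<in>N. x$j\<bar> \<le> (\<Sum>j\<in>N. \<bar>x$j\<bar>)" by (rule sum_abs)
  also have "\<dots> \<le> of_nat (card N) * \<bar>x$i\<bar>" by (rule sum_bounded_above) (use xle in auto)
  also have "card N = degree E i" by (simp add: N_def degree_def)
  finally have sN: "\<bar>\<Sum>j\<in>N. x$j\<bar> \<le> real (degree E i) * \<bar>x$i\<bar>" .
  have "\<bar>c\<bar> * \<bar>x$i\<bar> = \<bar>real (degree E i) * x$i + (\<Sum>j\<in>N. x$j)\<bar>"
    using row ex by (metis abs_mult scaleR_eq_iff vector_scaleR_component real_scaleR_def)
  also have "\<dots> \<le> real (degree E i) * \<bar>x$i\<bar> + \<bar>\<Sum>j\<in>N. x$j\<bar>"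
    by (metis abs_mult abs_of_nat abs_triangle_ineq)
  also have "\<dots> \<le> (2 * real (degree E i)) * \<bar>x$i\<bar>" using sN by (simp add: algebra_simps)
  finally have "\<bar>c\<bar> \<le> 2 * real (degree E i)" using xi by (simp add: mult_le_cancel_right)
  moreover have "real (degree E i) \<le> real (max_degree E)" using deg_le_max by simp
  ultimately show ?thesis by linarith
qed

lemma randic_lower:
  fixes E :: "'a::finite \<Rightarrow> 'a \<Rightarrow> bool"
  assumes sg: "simple_graph E" and dpos: "\<And>u. degree E u \<ge> 1"
  shows "sqrt (real (max_degree E)) / (real (max_degree E) + 1) * real CARD('a) \<le> randic_index E"
proof -
  define D where "D = real (max_degree E)"
  define k where "k = sqrt D / (D + 1)"
  define d where "d = (\<lambda>w. real (degree E w))"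
  define Ed where "Ed = {{u, v} | u v. E u v}"
  have finEd: "finite Ed" by (rule finite_subset[OF subset_UNIV]) simp
  have dD: "d w \<le> D" for w unfolding d_def D_def using deg_le_max by simp
  have d1: "d w \<ge> 1" for w unfolding d_def using dpos[of w] by simp
  have tb: "k * (\<Sum>w\<in>e. 1 / d w) \<le> 1 / sqrt (\<Prod>w\<in>e. d w)" if eE: "e \<in> Ed" for e
  proof -
    obtain u v where e: "e = {u, v}" and uv: "E u v" using eE unfolding Ed_def by blast
    have "u \<noteq> v" using uv sg_irr[OF sg] by blast
    then have S: "(\<Sum>w\<in>e. 1 / d w) = 1 / (sqrt (d u))^2 + 1 / (sqrt (d v))^2"
      and P: "(\<Prod>w\<in>e. d w) = d u * d v" using d1[of u] d1[of v] by (simp_all add: e)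
    have "sqrt D / ((sqrt D)^2 + 1) * (1 / (sqrt (d u))^2 + 1 / (sqrt (d v))^2) \<le> 1 / (sqrt (d u) * sqrt (d v))"
      by (rule key_ineq) (use d1 dD in auto)
    moreover have "(sqrt D)^2 = D" using d1[of u] dD[of u] by simp
    ultimately show ?thesis unfolding S P k_def by (simp add: real_sqrt_mult)
  qed
  have "k * real CARD('a) = k * (\<Sum>w\<in>UNIV. 1 / d w * real (card {e \<in> Ed. w \<in> e}))"
  proof -
    have cw: "card {e \<in> Ed. w \<in> e} = degree E w" for w
    proof -
      have "{e \<in> Ed. w \<in> e} = (\<lambda>v. {w, v}) ` {v. E w v}"
      proof
        show "{e \<in> Ed. w \<in> e} \<subseteq> (\<lambda>v. {w, v}) ` {v. E w v}"
        proof clarify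
          fix e assume "e \<in> Ed" "w \<in> e"
          then obtain u v where e: "e = {u, v}" and uv: "E u v" unfolding Ed_def by blast
          show "e \<in> (\<lambda>v. {w, v}) ` {v. E w v}"
          proof (cases "w = u")
            case True then show ?thesis using e uv by blast
          next
            case False then have "w = v" using \<open>w \<in> e\<close> e by blast
            then show ?thesis using e uv sg_sym[OF sg, of u v] by (auto simp: insert_commute)
          qed
        qed
        show "(\<lambda>v. {w, v}) ` {v. E w v} \<subseteq> {e \<in> Ed. w \<in> e}" unfolding Ed_def by blast
      qed
      moreover have "inj_on (\<lambda>v. {w, v}) {v. E w v}"
        by (rule inj_onI) (use sg_irr[OF sg] in \<open>auto simp: doubleton_eq_iff\<close>)
      ultimately show ?thesis by (simp add: card_image degree_def)
    qed
    have "(\<Sum>w\<in>UNIV. 1 / d w * real (card {e \<in> Ed. w \<in> e})) = (\<Sum>w\<in>(UNIV::'a set). 1)"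
    proof (rule sum.cong)
      fix w :: 'a
      show "1 / d w * real (card {e \<in> Ed. w \<in> e}) = 1"
        using d1[of w] cw[of w] by (simp add: d_def)
    qed simp
    then show ?thesis by simp
  qed
  also have "(\<Sum>w\<in>UNIV. 1 / d w * real (card {e \<in> Ed. w \<in> e})) = (\<Sum>e\<in>Ed. \<Sum>w\<in>e. 1 / d w)"
  proof -
    have "(\<Sum>e\<in>Ed. \<Sum>w\<in>e. 1 / d w) = (\<Sum>e\<in>Ed. \<Sum>w\<in>UNIV. if w \<in> e then 1 / d w else 0)"
      by (rule sum.cong) (simp_all add: sum.If_cases)
    also have "\<dots> = (\<Sum>w\<in>UNIV. \<Sum>e\<in>Ed. if w \<in> e then 1 / d w else 0)" by (rule sum.swap)
    also have "\<dots> = (\<Sum>w\<in>UNIV. 1 / d w * real (card {e \<in> Ed. w \<in> e}))"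
    proof (rule sum.cong)
      fix w :: 'a
      show "(\<Sum>e\<in>Ed. if w \<in> e then 1 / d w else 0) = 1 / d w * real (card {e \<in> Ed. w \<in> e})"
        using finEd by (simp add: sum.If_cases Int_def conj_commute)
    qed simp
    finally show ?thesis by simp
  qed
  also have "k * (\<Sum>e\<in>Ed. \<Sum>w\<in>e. 1 / d w) = (\<Sum>e\<in>Ed. k * (\<Sum>w\<in>e. 1 / d w))"
    by (simp add: sum_distrib_left)
  also have "\<dots> \<le> (\<Sum>e\<in>Ed. 1 / sqrt (\<Prod>w\<in>e. d w))" by (rule sum_mono) (rule tb)
  also have "\<dots> = randic_index E" unfolding randic_index_def Ed_def d_def by simp
  finally show ?thesis unfolding k_def D_def .
qed

theorem lemma3p4:
  fixes E :: "'a::finite \<Rightarrow> 'a \<Rightarrow> bool"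
  assumes "simple_graph E"
    and "connected_graph E"
    and "CARD('a) \<ge> 2"
    and "real (max_degree E) < real CARD('a) / 2"
  shows "signless_spectral_radius E / randic_index E
           < real CARD('a) / sqrt (real CARD('a) - 1)"
proof -
  note sg = assms(1)
  have dpos: "degree E u \<ge> 1" for u
  proof -
    obtain v :: 'a where "v \<noteq> u"
    proof (rule ccontr)
      assume "\<not> thesis"
      then have "\<forall>v. v = u" using that by blast
      then have "(UNIV :: 'a set) = {u}" by auto
      then show False using assms(3) by (metis card_1_singleton_iff numeral_le_one_iff semiring_norm(69) One_nat_def card.empty card_insert_disjoint empty_iff finite.emptyI)
    qed
    moreover have "(u, v) \<in> {(x, y). E x y}\<^sup>*" using assms(2) unfolding connected_graph_def by blast
    ultimately obtain w where "E u w" by (metis (no_types, lifting) case_prodD converse_rtranclE mem_Collect_eq)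
    then have "{v. E u v} \<noteq> {}" by blast
    then show ?thesis unfolding degree_def by (simp add: Suc_leI card_gt_0_iff)
  qed
  define D where "D = real (max_degree E)"
  define N where "N = real CARD('a)"
  have D1: "D \<ge> 1" using dpos[of undefined] deg_le_max[of E undefined] unfolding D_def by linarith
  have DN: "2 * D \<le> N - 1"
  proof -
    have "2 * max_degree E < CARD('a)" using assms(4) by linarith
    then have "2 * max_degree E + 1 \<le> CARD('a)" by linarith
    then have "real (2 * max_degree E + 1) \<le> real CARD('a)" by (simp only: of_nat_le_iff)
    then show ?thesis unfolding D_def N_def by simp
  qed
  define Q where "Q = signless_laplacian E"
  have symQ: "transpose Q = Q"
    unfolding Q_def signless_laplacian_def degree_matrix_def adjacency_matrix_def transpose_def
    by (simp add: vec_eq_iff sg_sym[OF sg])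
  define S where "S = {c. is_eigenvalue Q c}"
  have "finite S" unfolding S_def by (rule sym_eigen_finite[OF symQ])
  moreover have "S \<noteq> {}" unfolding S_def using sym_eigen_exists[OF symQ] by blast
  ultimately have "Max S \<in> S" by (rule Max_in)
  then have q: "signless_spectral_radius E \<le> 2 * D"
    unfolding signless_spectral_radius_def S_def Q_def D_def using eig_bound[OF sg] by blast
  have R: "sqrt D / (D + 1) * N \<le> randic_index E"
    unfolding D_def N_def by (rule randic_lower[OF sg dpos])
  have kpos: "sqrt D / (D + 1) * N > 0" using D1 assms(3) unfolding N_def by simp
  have Rpos: "randic_index E > 0" using R kpos by linarith
  have "signless_spectral_radius E / randic_index E \<le> 2 * D / randic_index E"
    using q Rpos by (simp add: divide_right_mono)
  also have "\<dots> \<le> 2 * D / (sqrt D / (D + 1) * N)"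
  proof (rule divide_left_mono[OF R])
    show "0 \<le> 2 * D" using D1 by simp
    show "0 < randic_index E * (sqrt D / (D + 1) * N)" using Rpos kpos by (rule mult_pos_pos)
  qed
  also have "\<dots> < N / sqrt (N - 1)" by (rule final_arith[OF D1 DN])
  finally show ?thesis unfolding N_def .
qed

end
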